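(* Let $\mathcal{A}\subset\mathbb{R}^d$ be a finite set of pairwise distinct actions, let $A\in\mathbb{R}^{d\times\mathcal{A}}$ be the matrix whose columns are the actions $a\in\mathcal{A}$, let $\Delta^{\mathcal{A}}$ be the probability simplex over $\mathcal{A}$ and $\mathcal{C}=\operatorname{conv}(\mathcal{A})$. Fix a critic $Q:\mathcal{A}\to\mathbb{R}$ with score vector $\gamma_\beta=(Q(a))_{a\in\mathcal{A}}\in\mathbb{R}^{\mathcal{A}}$, a temperature $\tau>0$, a perturbation scale $\varepsilon>0$, and an integer $m\ge 1$. Consider the static actor update of Structured Reinforcement Learning: given $\theta^{(t)}\in\mathbb{R}^d$, (i) draw i.i.d. standard Gaussian vectors $Z_1,\dots,Z_m\in\mathbb{R}^d$ and set $a_i=\arg\max_{a\in\mathcal{A}}(\theta^{(t)}+\varepsilon Z_i)^\top a$; (ii) form the target action $$\widehat a=\sum_{i=1}^m a_i\,\frac{\exp(Q(a_i)/\tau)}{\sum_{j=1}^m\exp(Q(a_j)/\tau)};$$ (iii) take $\theta^{(t+1)}\in\arg\min_{\theta\in\mathbb{R}^d}\mathcal{L}_{\Omega_{\varepsilon,\mathcal{C}}}(\theta;\widehat a)$, where $\mathcal{L}_{\Omega}(\theta;\mu)=\Omega^*(\theta)+\Omega(\mu)-\langle\theta,\mu\rangle$ is the Fenchel-Young loss generated by $\Omega$. Then this update can be written as the sampling-based primal-dual iteration $$(a_i^{(t+\frac12)})_{i\in[m]}\sim_{\text{i.d.}}\nabla\Omega_{\varepsilon,\Delta}^*(A^\top\theta^{(t)}),\qquad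 \hat q_m^{(t+\frac12)}=\frac1m\sum_{i=1}^m\delta_{a_i^{(t+\frac12)}},\qquad \gamma_m^{(t+\frac12)}\in\partial\Omega_\Delta(\hat q_m^{(t+\frac12)}),$$ $$\mu^{(t+1)}=A\,\nabla\Omega_\Delta^*\Big(\gamma_m^{(t+\frac12)}+\tfrac1\tau\gamma_\beta\Big),\qquad \theta^{(t+1)}\in\partial\Omega_{\varepsilon,\mathcal{C}}(\mu^{(t+1)}),$$ in the following sense: sampling $a_i^{(t+\frac12)}$ i.i.d. from the distribution $\nabla\Omega_{\varepsilon,\Delta}^*(A^\top\theta^{(t)})$ is equivalent to step (i); for every choice of $\gamma_m^{(t+\frac12)}\in\partial\Omega_\Delta(\hat q_m^{(t+\frac12)})$ one has $\mu^{(t+1)}=\widehat a$ as in step (ii); and $\theta^{(t+1)}\in\partial\Omega_{\varepsilon,\mathcal{C}}(\mu^{(t+1)})$ holds if and only if $\theta^{(t+1)}$ minimizes $\mathcal{L}_{\Omega_{\varepsilon,\mathcal{C}}}(\cdot\,;\mu^{(t+1)})$ as in step (iii).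
   Context: $\delta_a$ denotes the Dirac distribution on $a$; $\Omega^*$ denotes the Fenchel conjugate, $\nabla$ the gradient and $\partial$ the subdifferential. Negentropy: $\Omega_\Delta(q)=\sum_{a\in\mathcal{A}}q_a\log q_a+\mathbb{I}_{\Delta^{\mathcal{A}}}(q)$, with $\mathbb{I}$ the convex indicator function. For $\gamma\in\mathbb{R}^{\mathcal{A}}$, $\nabla\Omega_\Delta^*(\gamma)=\big(e^{\gamma_a}/\sum_{a'}e^{\gamma_{a'}}\big)_{a\in\mathcal{A}}$. Extension to the boundary: for $\gamma\in(\mathbb{R}\cup\{-\infty\})^{\mathcal{A}}$ with nonempty effective support $\hat{\mathcal{A}}(\gamma)=\{a:\gamma_a>-\infty\}$, $\nabla\Omega_\Delta^*(\gamma)_a=0$ for $a\notin\hat{\mathcal{A}}(\gamma)$ and equals the softmax of the finite components $(\gamma_{a'})_{a'\in\hat{\mathcal{A}}(\gamma)}$ at $a$ otherwise. For $q\in\Delta^{\mathcal{A}}$ with support $\hat{\mathcal{A}}(q)=\{a:q_a>0\}$, $\partial\Omega_\Delta(q)$ is the set of $\gamma\in(\mathbb{R}\cup\{-\infty\})^{\mathcal{A}}$ with $\gamma_a=-\infty$ for $a\notin\hat{\mathcal{A}}(q)$ and $(\gamma_a)_{a\in\hat{\mathcal{A}}(q)}\in\partial\Omega_{\Delta^{\hat{\mathcal{A}}(q)}}(\hat q)$, where $\hat q$ is the restriction of $q$ to its support viewed as an element of the simplex $\Delta^{\hat{\mathcal{A}}(q)}$ and $\Omega_{\Delta^{\hat{\mathcal{A}}(q)}}$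 is the negentropy on that simplex. Sparse perturbation: for $\gamma\in\mathbb{R}^{\mathcal{A}}$, $F_{\varepsilon,\Delta}(\gamma)=\mathbb{E}_Z\big[\max_{a\in\mathcal{A}}\gamma_a+\varepsilon Z^\top a\big]=\mathbb{E}_Z\big[\max_{q\in\Delta^{\mathcal{A}}}(\gamma+\varepsilon A^\top Z)^\top q\big]$ with $Z$ standard Gaussian in $\mathbb{R}^d$, and $\Omega_{\varepsilon,\Delta}:=F_{\varepsilon,\Delta}^*$, so that $\nabla\Omega_{\varepsilon,\Delta}^*(\gamma)=\mathbb{E}_Z\big[\arg\max_{q\in\Delta^{\mathcal{A}}}(\gamma+\varepsilon A^\top Z)^\top q\big]$. The induced regularization on the moment polytope is $\Omega_{\varepsilon,\mathcal{C}}(\mu)=\min_{q\in\Delta^{\mathcal{A}}:\,Aq=\mu}\Omega_{\varepsilon,\Delta}(q)$ for $\mu\in\mathcal{C}$. *)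

theory Defs
  imports "HOL-Probability.Probability"
begin

text \<open>Actions are indexed by a finite type 'a via an injective map act :: 'a => real^'d
  (a finite set of pairwise distinct actions). Vectors in R^A are real^'a.\<close>

definition act_matrix :: "('a::finite \<Rightarrow> real^'d) \<Rightarrow> real^'a^'d" where
  "act_matrix act = (\<chi> i. \<chi> a. act a $ i)"

definition prob_simplex :: "(real^'a::finite) set" where
  "prob_simplex = {q. (\<forall>a. 0 \<le> q $ a) \<and> (\<Sum>a\<in>UNIV. q $ a) = 1}"

definition std_gauss :: "(real^'d::finite) measure" where
  "std_gauss = density lborel (\<lambda>x. ennreal (\<Prod>i\<in>UNIV. std_normal_density (x $ i)))"

definition fconj :: "('v::real_inner \<Rightarrow> ereal) \<Rightarrow> 'v \<Rightarrow> ereal" where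
  "fconj f y = (SUP x. ereal (y \<bullet> x) - f x)"

definition subgrad :: "('v::real_inner \<Rightarrow> ereal) \<Rightarrow> 'v \<Rightarrow> 'v set" where
  "subgrad f x = {g. f x \<noteq> \<infinity> \<and> f x \<noteq> -\<infinity> \<and> (\<forall>y. f y \<ge> f x + ereal (g \<bullet> (y - x)))}"

definition fy_loss :: "('v::real_inner \<Rightarrow> ereal) \<Rightarrow> 'v \<Rightarrow> 'v \<Rightarrow> ereal" where
  "fy_loss \<Omega> \<theta> \<mu> = fconj \<Omega> \<theta> + \<Omega> \<mu> - ereal (\<theta> \<bullet> \<mu>)"

definition F_pert :: "real \<Rightarrow> ('a::finite \<Rightarrow> real^'d::finite) \<Rightarrow> real^'a \<Rightarrow> real" where
  "F_pert \<epsilon> act \<gamma> = (\<integral>z. Max (range (\<lambda>a. \<gamma> $ a + \<epsilon> * (z \<bullet> act a))) \<partial>std_gauss)"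

definition Omega_pert_simplex :: "real \<Rightarrow> ('a::finite \<Rightarrow> real^'d::finite) \<Rightarrow> real^'a \<Rightarrow> ereal" where
  "Omega_pert_simplex \<epsilon> act = fconj (\<lambda>\<gamma>. ereal (F_pert \<epsilon> act \<gamma>))"

text \<open>Induced regularization on the moment polytope (+infinity outside conv A).\<close>
definition Omega_pert_C :: "real \<Rightarrow> ('a::finite \<Rightarrow> real^'d::finite) \<Rightarrow> real^'d \<Rightarrow> ereal" where
  "Omega_pert_C \<epsilon> act \<mu> =
     Inf {Omega_pert_simplex \<epsilon> act q | q. q \<in> prob_simplex \<and> act_matrix act *v q = \<mu>}"

definition xlogx :: "real \<Rightarrow> real" where
  "xlogx x = (if x = 0 then 0 else x * ln x)"

text \<open>Subdifferential of the negentropy on the simplex over a finite set S, at q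
  (a point of that simplex), with the indicator written out.\<close>
definition negent_subgrad_on :: "'a set \<Rightarrow> ('a \<Rightarrow> real) \<Rightarrow> ('a \<Rightarrow> real) set" where
  "negent_subgrad_on S q = {g. \<forall>p. (\<forall>a\<in>S. 0 \<le> p a) \<and> (\<Sum>a\<in>S. p a) = 1 \<longrightarrow>
      (\<Sum>a\<in>S. xlogx (p a)) \<ge> (\<Sum>a\<in>S. xlogx (q a)) + (\<Sum>a\<in>S. g a * (p a - q a))}"

text \<open>Boundary-extended subdifferential of the negentropy Omega_Delta at q in the simplex.\<close>
definition negent_subdiff :: "real^'a::finite \<Rightarrow> ('a \<Rightarrow> ereal) set" where
  "negent_subdiff q = {\<gamma>. (\<forall>a. q $ a = 0 \<longrightarrow> \<gamma> a = -\<infinity>) \<and>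
      (\<forall>a. q $ a > 0 \<longrightarrow> \<gamma> a \<noteq> \<infinity> \<and> \<gamma> a \<noteq> -\<infinity>) \<and>
      (\<lambda>a. real_of_ereal (\<gamma> a)) \<in> negent_subgrad_on {a. q $ a > 0} (\<lambda>a. q $ a)}"

text \<open>Boundary-extended gradient of the conjugate negentropy (softmax on the effective support).\<close>
definition softmax_ext :: "('a::finite \<Rightarrow> ereal) \<Rightarrow> real^'a" where
  "softmax_ext \<gamma> = (\<chi> a. if \<gamma> a = -\<infinity> then 0 else
      exp (real_of_ereal (\<gamma> a)) / (\<Sum>b\<in>{b. \<gamma> b \<noteq> -\<infinity>}. exp (real_of_ereal (\<gamma> b))))"

end

theory Submission
  imports Defs
begin


lemma Basis_vec_real: "(Basis :: (real^'d::finite) set) = range (\<lambda>i. axis i 1)"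
  by (auto simp: Basis_vec_def)

lemma prod_Basis_vec:
  fixes h :: "real^'d::finite \<Rightarrow> 'b::comm_monoid_mult"
  shows "(\<Prod>b\<in>Basis. h b) = (\<Prod>i\<in>UNIV. h (axis i 1))"
  unfolding Basis_vec_real
  by (subst prod.reindex) (auto simp: inj_on_def axis_eq_axis)

lemma nn_integral_vec_prod:
  fixes f :: "'d::finite \<Rightarrow> real \<Rightarrow> ennreal"
  assumes [measurable]: "\<And>i. f i \<in> borel_measurable borel"
  shows "(\<integral>\<^sup>+x. (\<Prod>i\<in>UNIV. f i (x $ i)) \<partial>(lborel :: (real^'d) measure)) = (\<Prod>i\<in>UNIV. (\<integral>\<^sup>+x. f i x \<partial>lborel))"
proof -
  define g where "g b = f (axis_index b)" for b :: "real^'d"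
  have ai: "axis_index (axis i (1::real)) = i" for i :: 'd
    by (simp add: axis_index_def axis_eq_axis)
  have "(\<integral>\<^sup>+x. (\<Prod>i\<in>UNIV. f i (x $ i)) \<partial>(lborel :: (real^'d) measure)) =
        (\<integral>\<^sup>+x. (\<Prod>b\<in>Basis. g b (x \<bullet> b)) \<partial>(lborel :: (real^'d) measure))"
    by (simp add: prod_Basis_vec g_def ai inner_axis)
  also have "\<dots> = (\<Prod>b\<in>Basis. (\<integral>\<^sup>+x. g b x \<partial>lborel))"
    by (rule nn_integral_lborel_prod) (auto simp: g_def)
  also have "\<dots> = (\<Prod>i\<in>UNIV. (\<integral>\<^sup>+x. f i x \<partial>lborel))"
    by (simp add: prod_Basis_vec g_def ai)
  finally show ?thesis .
qed


definition gdens :: "real^'d::finite \<Rightarrow> real" where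
  "gdens x = (\<Prod>i\<in>UNIV. std_normal_density (x $ i))"

lemma gdens_nonneg: "0 \<le> gdens x"
  by (simp add: gdens_def prod_nonneg)

lemma gdens_meas[measurable]: "gdens \<in> borel_measurable borel"
  unfolding gdens_def by measurable

lemma std_gauss_eq: "std_gauss = density lborel (\<lambda>x. ennreal (gdens x))"
  by (simp add: std_gauss_def gdens_def)

lemma sets_std_gauss[simp, measurable_cong]: "sets std_gauss = sets borel"
  by (simp add: std_gauss_def)

lemma space_std_gauss[simp]: "space std_gauss = UNIV"
  by (simp add: std_gauss_def)

lemma nn_integral_gauss_prod:
  fixes f :: "'d::finite \<Rightarrow> real \<Rightarrow> real"
  assumes [measurable]: "\<And>i. f i \<in> borel_measurable borel"
    and nn: "\<And>i t. 0 \<le> f i t"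
  shows "(\<integral>\<^sup>+x. ennreal (gdens x * (\<Prod>i\<in>UNIV. f i (x $ i))) \<partial>(lborel :: (real^'d) measure))
     = (\<Prod>i\<in>UNIV. (\<integral>\<^sup>+t. ennreal (std_normal_density t * f i t) \<partial>lborel))"
proof -
  have "(\<integral>\<^sup>+x. ennreal (gdens x * (\<Prod>i\<in>UNIV. f i (x $ i))) \<partial>(lborel :: (real^'d) measure))
     = (\<integral>\<^sup>+x. (\<Prod>i\<in>UNIV. ennreal (std_normal_density (x $ i) * f i (x $ i))) \<partial>(lborel :: (real^'d) measure))"
    by (rule nn_integral_cong) (simp add: gdens_def prod.distrib[symmetric] prod_ennreal nn)
  also have "\<dots> = (\<Prod>i\<in>UNIV. (\<integral>\<^sup>+t. ennreal (std_normal_density t * f i t) \<partial>lborel))"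
    by (rule nn_integral_vec_prod) measurable
  finally show ?thesis .
qed

lemma nn_std_normal_finite:
  "(\<integral>\<^sup>+t. ennreal (std_normal_density t * \<bar>t\<bar> ^ k) \<partial>lborel) < \<infinity>"
proof -
  have "integrable lborel (\<lambda>t. std_normal_density t * \<bar>t\<bar> ^ k)"
    by (rule integrable_std_normal_moment_abs)
  then have "(\<integral>\<^sup>+t. ennreal (norm (std_normal_density t * \<bar>t\<bar> ^ k)) \<partial>lborel) < \<infinity>"
    by (simp add: integrable_iff_bounded)
  then show ?thesis by (simp add: abs_mult)
qed

lemma emeasure_std_gauss_UNIV: "emeasure (std_gauss :: (real^'a::finite) measure) UNIV = (1::ennreal)"
proof -

  have "emeasure (std_gauss :: (real^'a) measure) UNIV = (\<integral>\<^sup>+x. ennreal (gdens x * (\<Prod>i\<in>UNIV. (\<lambda>i t. 1) i (x $ i))) \<partial>(lborel :: (real^'a) measure))"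
    by (simp add: std_gauss_eq emeasure_density)
  also have "\<dots> = (\<Prod>i\<in>(UNIV::'a set). (\<integral>\<^sup>+t. ennreal (std_normal_density t * 1) \<partial>lborel))"
    by (rule nn_integral_gauss_prod) auto
  also have "\<dots> = 1"
  proof -
    have "(\<integral>\<^sup>+t. ennreal (std_normal_density t) \<partial>lborel) = 1"
      by (subst nn_integral_eq_integral) auto
    then show ?thesis by simp
  qed
  finally show ?thesis .
qed

lemma prob_space_std_gauss: "prob_space (std_gauss :: (real^'d::finite) measure)"
  by (rule prob_spaceI) (simp add: emeasure_std_gauss_UNIV)

lemma integrable_gauss_abs_comp:
  "integrable std_gauss (\<lambda>x::real^'d::finite. x $ j)"
proof -
  have "integrable lborel (\<lambda>x::real^'d. gdens x *\<^sub>R (x $ j))"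
  proof (rule integrableI_bounded)
    have "(\<integral>\<^sup>+x. ennreal (norm (gdens x *\<^sub>R (x $ j))) \<partial>(lborel :: (real^'d) measure))
       = (\<integral>\<^sup>+x. ennreal (gdens x * (\<Prod>i\<in>UNIV. (\<lambda>i t. if i = j then \<bar>t\<bar> else 1) i (x $ i))) \<partial>(lborel :: (real^'d) measure))"
    proof (rule nn_integral_cong)
      fix x :: "real^'d"
      have "(\<Prod>i\<in>UNIV. (\<lambda>i t. if i = j then \<bar>t\<bar> else 1) i (x $ i)) = \<bar>x $ j\<bar>"
        by (subst prod.If_cases) auto
      then show "ennreal (norm (gdens x *\<^sub>R (x $ j))) = ennreal (gdens x * (\<Prod>i\<in>UNIV. (\<lambda>i t. if i = j then \<bar>t\<bar> else 1) i (x $ i)))"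
        by (simp add: abs_mult gdens_nonneg)
    qed
    also have "\<dots> = (\<Prod>i\<in>UNIV. (\<integral>\<^sup>+t. ennreal (std_normal_density t * (if i = j then \<bar>t\<bar> else 1)) \<partial>lborel))"
      by (rule nn_integral_gauss_prod) auto
    also have "\<dots> < \<infinity>"
    proof -
      have ne: "(\<integral>\<^sup>+t. ennreal (std_normal_density t * (if i = j then \<bar>t\<bar> else 1)) \<partial>lborel) \<noteq> top" for i
        using nn_std_normal_finite[of 1] nn_std_normal_finite[of 0] by (cases "i = j") auto
      have "(\<Prod>i\<in>UNIV. (\<integral>\<^sup>+t. ennreal (std_normal_density t * (if i = j then \<bar>t\<bar> else 1)) \<partial>lborel)) \<noteq> top"
        unfolding ennreal_prod_eq_top using ne by blast
      then show ?thesis by (simp add: less_top)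
    qed
    finally show "(\<integral>\<^sup>+x. ennreal (norm (gdens x *\<^sub>R (x $ j))) \<partial>(lborel :: (real^'d) measure)) < \<infinity>" .
  qed measurable
  then show ?thesis
    unfolding std_gauss_eq
    by (subst integrable_density) (auto simp: gdens_nonneg)
qed


lemma AE_gauss_hyperplane:
  fixes w :: "real^'d::finite"
  assumes "w \<noteq> 0"
  shows "AE z in std_gauss. w \<bullet> z \<noteq> c"
proof -
  have neg: "negligible {z. w \<bullet> z = c}"
    using assms by (rule negligible_hyperplane[OF disjI1])
  have cl: "closed {z::real^'d. w \<bullet> z = c}"
    by (intro closed_Collect_eq continuous_intros)
  then have bor: "{z::real^'d. w \<bullet> z = c} \<in> sets lborel" by simp
  have "{z. w \<bullet> z = c} \<in> null_sets lebesgue"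
    using neg by (simp add: negligible_iff_null_sets)
  then have "{z. w \<bullet> z = c} \<in> null_sets lborel"
    using null_sets_completion_iff[OF bor] by simp
  then have "AE z in lborel. w \<bullet> z \<noteq> c"
    by (rule AE_I') auto
  then show ?thesis
    unfolding std_gauss_eq by (subst AE_density) (auto elim: AE_mp)
qed


locale pert =
  fixes eps :: real and act :: "'a::finite \<Rightarrow> real^'d::finite"
  assumes eps_pos: "eps > 0" and inj: "inj act"
begin

definition val :: "real^'a \<Rightarrow> real^'d \<Rightarrow> 'a \<Rightarrow> real" where
  "val \<gamma> z a = \<gamma> $ a + eps * (z \<bullet> act a)"

definition mx :: "real^'a \<Rightarrow> real^'d \<Rightarrow> real" where
  "mx \<gamma> z = Max (range (val \<gamma> z))"

definition S :: "real^'a \<Rightarrow> 'a \<Rightarrow> (real^'d) set" where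
  "S \<gamma> a = {z. \<forall>b. b \<noteq> a \<longrightarrow> val \<gamma> z b < val \<gamma> z a}"

definition G :: "real^'a \<Rightarrow> real^'a" where
  "G \<gamma> = (\<chi> a. measure std_gauss (S \<gamma> a))"

definition nt :: "real^'a \<Rightarrow> real^'d \<Rightarrow> bool" where
  "nt \<gamma> z = (\<forall>a b. a \<noteq> b \<longrightarrow> val \<gamma> z a \<noteq> val \<gamma> z b)"

abbreviation F :: "real^'a \<Rightarrow> real" where
  "F \<equiv> F_pert eps act"

lemma F_def: "F \<gamma> = (\<integral>z. mx \<gamma> z \<partial>std_gauss)"
  by (simp add: F_pert_def mx_def val_def)

lemma val_meas[measurable]: "(\<lambda>z. val \<gamma> z a) \<in> borel_measurable borel"
  unfolding val_def by measurable

lemma mx_meas[measurable]: "mx \<gamma> \<in> borel_measurable borel"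
proof -
  have "mx \<gamma> = (\<lambda>z. Max ((\<lambda>a. val \<gamma> z a) ` UNIV))"
    by (simp add: mx_def fun_eq_iff)
  also have "\<dots> \<in> borel_measurable borel"
    by (rule borel_measurable_Max) auto
  finally show ?thesis .
qed

lemma S_sets[measurable]: "S \<gamma> a \<in> sets borel"
proof -
  have "S \<gamma> a = (\<Inter>b\<in>UNIV. {z. b \<noteq> a \<longrightarrow> val \<gamma> z b < val \<gamma> z a})"
    by (auto simp: S_def)
  also have "\<dots> \<in> sets borel"
    by (intro sets.finite_INT) auto
  finally show ?thesis .
qed

lemma nt_sets[measurable]: "{z. nt \<gamma> z} \<in> sets borel"
proof -
  have "{z. nt \<gamma> z} = (\<Inter>a\<in>UNIV. \<Inter>b\<in>UNIV. {z. a \<noteq> b \<longrightarrow> val \<gamma> z a \<noteq> val \<gamma> z b})"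
    by (auto simp: nt_def)
  also have "\<dots> \<in> sets borel"
    by (intro sets.finite_INT) auto
  finally show ?thesis .
qed

lemma AE_nt: "AE z in std_gauss. nt \<gamma> z"
proof -
  have "AE z in std_gauss. \<forall>p\<in>UNIV. fst p \<noteq> snd p \<longrightarrow> val \<gamma> z (fst p) \<noteq> val \<gamma> z (snd p)"
  proof (rule AE_finite_allI)
    fix p :: "'a \<times> 'a"
    obtain a b where p: "p = (a, b)" by fastforce
    show "AE z in std_gauss. fst p \<noteq> snd p \<longrightarrow> val \<gamma> z (fst p) \<noteq> val \<gamma> z (snd p)"
    proof (cases "a = b")
      case True then show ?thesis by (simp add: p)
    next
      case False
      then have w: "act a - act b \<noteq> 0" using inj by (auto dest: injD)
      have pw: "val \<gamma> z a \<noteq> val \<gamma> z b" if h: "(act a - act b) \<bullet> z \<noteq> (\<gamma> $ b - \<gamma> $ a) / eps" for z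
      proof
        assume "val \<gamma> z a = val \<gamma> z b"
        then have "eps * ((act a - act b) \<bullet> z) = \<gamma> $ b - \<gamma> $ a"
          by (simp add: val_def inner_diff_left inner_commute algebra_simps)
        then have "(act a - act b) \<bullet> z = (\<gamma> $ b - \<gamma> $ a) / eps"
          using eps_pos by (simp add: field_simps)
        with h show False by simp
      qed
      show ?thesis
        using AE_gauss_hyperplane[OF w, of "(\<gamma> $ b - \<gamma> $ a) / eps"]
        by (rule eventually_mono) (auto simp: p pw)
    qed
  qed simp
  then show ?thesis
    unfolding nt_def by (rule eventually_mono) auto
qed

lemma S_disj: "z \<in> S \<gamma> a \<Longrightarrow> z \<in> S \<gamma> b \<Longrightarrow> a = b"
proof (rule ccontr)
  assume "z \<in> S \<gamma> a" "z \<in> S \<gamma> b" "a \<noteq> b"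
  then have "val \<gamma> z b < val \<gamma> z a" "val \<gamma> z a < val \<gamma> z b"
    unfolding S_def by auto
  then show False by simp
qed

lemma winner: "nt \<gamma> z \<Longrightarrow> \<exists>a. z \<in> S \<gamma> a"
proof -
  assume nt: "nt \<gamma> z"
  have "Max (range (val \<gamma> z)) \<in> range (val \<gamma> z)"
    by (rule Max_in) auto
  then obtain a where a: "val \<gamma> z a = Max (range (val \<gamma> z))" by (metis rangeE)
  have "val \<gamma> z b < val \<gamma> z a" if "b \<noteq> a" for b
  proof -
    have "val \<gamma> z b \<le> val \<gamma> z a" unfolding a by (rule Max_ge) auto
    moreover have "val \<gamma> z b \<noteq> val \<gamma> z a" using nt that by (auto simp: nt_def)
    ultimately show ?thesis by simp
  qed
  then show ?thesis unfolding S_def by blast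
qed

lemma mx_S: "z \<in> S \<gamma> a \<Longrightarrow> mx \<gamma> z = val \<gamma> z a"
proof -
  assume z: "z \<in> S \<gamma> a"
  show ?thesis unfolding mx_def
  proof (rule Max_eqI)
    fix y assume "y \<in> range (val \<gamma> z)"
    then obtain b where "y = val \<gamma> z b" by auto
    then show "y \<le> val \<gamma> z a" using z unfolding S_def
      by (cases "b = a") (auto intro: less_imp_le)
  qed auto
qed

lemma val_le_mx: "val \<gamma> z a \<le> mx \<gamma> z"
  unfolding mx_def by (rule Max_ge) auto

lemma mx_attained: "\<exists>a. mx \<gamma> z = val \<gamma> z a"
proof -
  have "Max (range (val \<gamma> z)) \<in> range (val \<gamma> z)"
    by (rule Max_in) auto
  then show ?thesis unfolding mx_def by (metis rangeE)
qed

lemma integrable_inner: "integrable std_gauss (\<lambda>z::real^'d. z \<bullet> v)"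
  unfolding inner_vec_def inner_real_def
  by (intro Bochner_Integration.integrable_sum integrable_mult_left) (simp add: integrable_gauss_abs_comp)

lemma prob_gauss: "prob_space (std_gauss :: (real^'d) measure)"
  by (rule prob_space_std_gauss)

lemma integrable_val: "integrable std_gauss (\<lambda>z. val \<gamma> z a)"
proof -
  interpret prob_space "std_gauss :: (real^'d) measure" by (rule prob_gauss)
  show ?thesis unfolding val_def
    by (intro Bochner_Integration.integrable_add integrable_const integrable_mult_right integrable_inner)
qed

lemma integrable_mx: "integrable std_gauss (mx \<gamma>)"
proof (rule Bochner_Integration.integrable_bound[where f="\<lambda>z. \<Sum>a\<in>UNIV. \<bar>val \<gamma> z a\<bar>"])
  show "integrable std_gauss (\<lambda>z. \<Sum>a\<in>UNIV. \<bar>val \<gamma> z a\<bar>)"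
    by (intro Bochner_Integration.integrable_sum Bochner_Integration.integrable_abs integrable_val)
  show "AE z in std_gauss. norm (mx \<gamma> z) \<le> norm (\<Sum>a\<in>UNIV. \<bar>val \<gamma> z a\<bar>)"
  proof (rule AE_I2)
    fix z
    obtain a where a: "mx \<gamma> z = val \<gamma> z a" using mx_attained by blast
    have "\<bar>val \<gamma> z a\<bar> \<le> (\<Sum>a\<in>UNIV. \<bar>val \<gamma> z a\<bar>)"
      by (rule member_le_sum) auto
    then show "norm (mx \<gamma> z) \<le> norm (\<Sum>a\<in>UNIV. \<bar>val \<gamma> z a\<bar>)"
      by (simp add: a)
  qed
qed simp

end


context pert begin

lemma inner_vec_sum: "(x::real^'a) \<bullet> y = (\<Sum>a\<in>UNIV. x $ a * y $ a)"
  by (simp add: inner_vec_def inner_real_def)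

lemma G_comp: "G \<gamma> $ a = measure std_gauss (S \<gamma> a)"
  by (simp add: G_def)

lemma S_unique: "z \<in> S \<gamma> a \<Longrightarrow> indicator (S \<gamma> b) z = (if b = a then 1 else (0::real))"
proof -
  assume z: "z \<in> S \<gamma> a"
  show ?thesis
  proof (cases "b = a")
    case True then show ?thesis using z by simp
  next
    case False
    then have "z \<notin> S \<gamma> b" using S_disj[of z \<gamma> b a] z by blast
    then show ?thesis using False by simp
  qed
qed

lemma G_simplex: "G \<gamma> \<in> prob_simplex"
proof -
  interpret P: prob_space "std_gauss :: (real^'d) measure" by (rule prob_gauss)
  have "(\<Sum>a\<in>UNIV. G \<gamma> $ a) = measure std_gauss (\<Union>a\<in>UNIV. S \<gamma> a)"
    unfolding G_comp
  proof (rule measure_finite_Union[symmetric])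
    show "disjoint_family_on (S \<gamma>) UNIV"
      unfolding disjoint_family_on_def using S_disj by blast
  qed auto
  also have "\<dots> = measure std_gauss (UNIV :: (real^'d) set)"
  proof (rule measure_eq_AE)
    show "AE z in std_gauss. (z \<in> (\<Union>a\<in>UNIV. S \<gamma> a)) = (z \<in> UNIV)"
      using AE_nt[of \<gamma>] by (rule eventually_mono) (auto dest: winner)
  qed simp_all
  also have "\<dots> = 1" using P.prob_space by simp
  finally show ?thesis
    by (simp add: prob_simplex_def G_comp)
qed

lemma G_nonneg: "0 \<le> G \<gamma> $ a"
  by (simp add: G_comp)

lemma inner_G: "h \<bullet> G \<gamma> = (\<Sum>a\<in>UNIV. h $ a * measure std_gauss (S \<gamma> a))"
  by (simp add: inner_vec_sum G_comp)

lemma subgrad_F: "F y \<ge> F \<gamma> + (y - \<gamma>) \<bullet> G \<gamma>"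
proof -
  interpret P: prob_space "std_gauss :: (real^'d) measure" by (rule prob_gauss)
  have ii: "integrable std_gauss (indicator (S \<gamma> a) :: _ \<Rightarrow> real)" for a
    by (rule integrable_real_indicator) (auto simp: P.emeasure_finite less_top[symmetric])
  have int_ind: "integrable std_gauss (\<lambda>z. \<Sum>a\<in>UNIV. indicator (S \<gamma> a) z * (y $ a - \<gamma> $ a))"
    by (intro Bochner_Integration.integrable_sum integrable_mult_left ii)
  have "(y - \<gamma>) \<bullet> G \<gamma> = (\<integral>z. (\<Sum>a\<in>UNIV. indicator (S \<gamma> a) z * (y $ a - \<gamma> $ a)) \<partial>std_gauss)"
    by (subst Bochner_Integration.integral_sum) (auto simp: inner_G mult.commute ii)
  also have "\<dots> \<le> (\<integral>z. mx y z - mx \<gamma> z \<partial>std_gauss)"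
  proof (rule integral_mono_AE)
    show "integrable std_gauss (\<lambda>z. mx y z - mx \<gamma> z)"
      by (intro Bochner_Integration.integrable_diff integrable_mx)
    show "AE z in std_gauss. (\<Sum>a\<in>UNIV. indicator (S \<gamma> a) z * (y $ a - \<gamma> $ a)) \<le> mx y z - mx \<gamma> z"
      using AE_nt[of \<gamma>]
    proof (rule eventually_mono)
      fix z assume "nt \<gamma> z"
      then obtain a where a: "z \<in> S \<gamma> a" using winner by blast
      have "(\<Sum>b\<in>UNIV. indicator (S \<gamma> b) z * (y $ b - \<gamma> $ b)) = y $ a - \<gamma> $ a"
        by (simp add: S_unique[OF a] if_distrib[of "\<lambda>c. c * _"] cong: if_cong)
      also have "\<dots> = val y z a - val \<gamma> z a" by (simp add: val_def)
      also have "\<dots> \<le> mx y z - mx \<gamma> z"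
        using val_le_mx[of y z a] mx_S[OF a] by simp
      finally show "(\<Sum>b\<in>UNIV. indicator (S \<gamma> b) z * (y $ b - \<gamma> $ b)) \<le> mx y z - mx \<gamma> z" .
    qed
  qed (rule int_ind)
  also have "\<dots> = F y - F \<gamma>"
    by (simp add: F_def integrable_mx)
  finally show ?thesis by simp
qed

end


context pert begin

lemma G_seq:
  assumes X: "X \<longlonglongrightarrow> \<gamma>"
  shows "(\<lambda>n. G (X n) $ a) \<longlonglongrightarrow> G \<gamma> $ a"
proof -
  interpret P: prob_space "std_gauss :: (real^'d) measure" by (rule prob_gauss)
  have "(\<lambda>n. \<integral>z. indicator (S (X n) a) z \<partial>std_gauss) \<longlonglongrightarrow> (\<integral>z. indicator (S \<gamma> a) z \<partial>std_gauss :: real)"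
  proof (rule integral_dominated_convergence[where w="\<lambda>_. 1"])
    show "AE z in std_gauss. (\<lambda>n. indicator (S (X n) a) z) \<longlonglongrightarrow> (indicator (S \<gamma> a) z :: real)"
      using AE_nt[of \<gamma>]
    proof (rule eventually_mono)
      fix z assume "nt \<gamma> z"
      then obtain c where c: "z \<in> S \<gamma> c" using winner by blast
      have vc: "(\<lambda>n. val (X n) z b) \<longlonglongrightarrow> val \<gamma> z b" for b
        unfolding val_def by (intro tendsto_intros X)
      have "eventually (\<lambda>n. \<forall>b. b \<noteq> c \<longrightarrow> val (X n) z b < val (X n) z c) sequentially"
      proof (rule eventually_all_finite)
        fix b
        show "eventually (\<lambda>n. b \<noteq> c \<longrightarrow> val (X n) z b < val (X n) z c) sequentially"
        proof (cases "b = c")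
          case True then show ?thesis by simp
        next
          case False
          then have lt: "0 < val \<gamma> z c - val \<gamma> z b" using c by (auto simp: S_def)
          have "(\<lambda>n. val (X n) z c - val (X n) z b) \<longlonglongrightarrow> val \<gamma> z c - val \<gamma> z b"
            by (intro tendsto_diff vc)
          from order_tendstoD(1)[OF this lt]
          show ?thesis by (rule eventually_mono) simp
        qed
      qed
      then have "eventually (\<lambda>n. z \<in> S (X n) c) sequentially"
        by (simp add: S_def)
      then have "eventually (\<lambda>n. indicator (S (X n) a) z = (indicator (S \<gamma> a) z :: real)) sequentially"
        by (rule eventually_mono) (simp add: S_unique[OF c] S_unique)
      then show "(\<lambda>n. indicator (S (X n) a) z) \<longlonglongrightarrow> (indicator (S \<gamma> a) z :: real)"
        by (rule tendsto_eventually)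
    qed
  qed (auto split: split_indicator)
  then show ?thesis by (simp add: G_comp)
qed

lemma G_cont: "(G \<longlongrightarrow> G \<gamma>) (at \<gamma>)"
proof (rule vec_tendstoI)
  fix a
  show "((\<lambda>x. G x $ a) \<longlongrightarrow> G \<gamma> $ a) (at \<gamma>)"
    unfolding tendsto_at_iff_sequentially comp_def
    using G_seq by blast
qed

lemma F_deriv: "(F has_derivative (\<lambda>h. h \<bullet> G \<gamma>)) (at \<gamma>)"
  unfolding has_derivative_at
proof
  show "bounded_linear (\<lambda>h. h \<bullet> G \<gamma>)" by (rule bounded_linear_inner_left)
  show "(\<lambda>h. norm (F (\<gamma> + h) - F \<gamma> - h \<bullet> G \<gamma>) / norm h) \<midarrow>0\<rightarrow> 0"
  proof (rule Lim_null_comparison)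
    show "\<forall>\<^sub>F h in at 0. norm (norm (F (\<gamma> + h) - F \<gamma> - h \<bullet> G \<gamma>) / norm h) \<le> norm (G (\<gamma> + h) - G \<gamma>)"
    proof (rule always_eventually, rule allI)
      fix h :: "real^'a"
      show "norm (norm (F (\<gamma> + h) - F \<gamma> - h \<bullet> G \<gamma>) / norm h) \<le> norm (G (\<gamma> + h) - G \<gamma>)"
      proof (cases "h = 0")
        case True then show ?thesis by simp
      next
        case False
        have l: "0 \<le> F (\<gamma> + h) - F \<gamma> - h \<bullet> G \<gamma>"
          using subgrad_F[of \<gamma> "\<gamma> + h"] by simp
        have u0: "F \<gamma> \<ge> F (\<gamma> + h) + (\<gamma> - (\<gamma> + h)) \<bullet> G (\<gamma> + h)"
          by (rule subgrad_F)
        have "F (\<gamma> + h) - F \<gamma> - h \<bullet> G \<gamma> \<le> h \<bullet> (G (\<gamma> + h) - G \<gamma>)"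
          using u0 by (simp add: inner_diff_right)
        also have "\<dots> \<le> norm h * norm (G (\<gamma> + h) - G \<gamma>)"
          by (rule norm_cauchy_schwarz)
        finally have u: "F (\<gamma> + h) - F \<gamma> - h \<bullet> G \<gamma> \<le> norm h * norm (G (\<gamma> + h) - G \<gamma>)" .
        have np: "norm h > 0" using False by simp
        show ?thesis
          using l u np by (simp add: divide_le_eq mult.commute)
      qed
    qed
    have "(\<lambda>h. G (\<gamma> + h)) \<midarrow>0\<rightarrow> G \<gamma>"
      by (rule LIM_offset_zero[OF G_cont])
    then have "(\<lambda>h. G (\<gamma> + h) - G \<gamma>) \<midarrow>0\<rightarrow> 0"
      using tendsto_diff[OF _ tendsto_const, of _ _ _ "G \<gamma>"] by fastforce
    then show "(\<lambda>h. norm (G (\<gamma> + h) - G \<gamma>)) \<midarrow>0\<rightarrow> 0"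
      using tendsto_norm_zero by blast
  qed
qed

end


context pert begin

abbreviation Om :: "real^'a \<Rightarrow> ereal" where
  "Om \<equiv> Omega_pert_simplex eps act"

lemma Om_eq: "Om q = (SUP \<gamma>. ereal (q \<bullet> \<gamma> - F \<gamma>))"
  by (simp add: Omega_pert_simplex_def fconj_def)

lemma Om_ge: "ereal (q \<bullet> \<gamma> - F \<gamma>) \<le> Om q"
  unfolding Om_eq by (rule SUP_upper) simp

lemma Om_G: "Om (G \<gamma>) = ereal (G \<gamma> \<bullet> \<gamma> - F \<gamma>)"
proof (rule antisym)
  show "Om (G \<gamma>) \<le> ereal (G \<gamma> \<bullet> \<gamma> - F \<gamma>)"
    unfolding Om_eq
  proof (rule SUP_least)
    fix y
    have "F y \<ge> F \<gamma> + (y - \<gamma>) \<bullet> G \<gamma>" by (rule subgrad_F)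
    then show "ereal (G \<gamma> \<bullet> y - F y) \<le> ereal (G \<gamma> \<bullet> \<gamma> - F \<gamma>)"
      by (simp add: inner_diff_left inner_commute)
  qed
qed (rule Om_ge)

lemma biconj: "fconj Om \<gamma> = ereal (F \<gamma>)"
proof (rule antisym)
  show "fconj Om \<gamma> \<le> ereal (F \<gamma>)"
    unfolding fconj_def
  proof (rule SUP_least)
    fix q
    have "ereal (\<gamma> \<bullet> q) - Om q \<le> ereal (\<gamma> \<bullet> q) - ereal (q \<bullet> \<gamma> - F \<gamma>)"
      by (rule ereal_minus_mono) (auto intro: Om_ge)
    also have "\<dots> = ereal (F \<gamma>)" by (simp add: inner_commute)
    finally show "ereal (\<gamma> \<bullet> q) - Om q \<le> ereal (F \<gamma>)" .
  qed
  have "ereal (F \<gamma>) = ereal (\<gamma> \<bullet> G \<gamma>) - Om (G \<gamma>)"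
    by (simp add: Om_G inner_commute)
  also have "\<dots> \<le> fconj Om \<gamma>"
    unfolding fconj_def by (rule SUP_upper) simp
  finally show "ereal (F \<gamma>) \<le> fconj Om \<gamma>" .
qed

lemma Om_lower: "Om q \<noteq> -\<infinity>"
proof -
  have "ereal (q \<bullet> 0 - F 0) \<le> Om q" by (rule Om_ge)
  then show ?thesis by auto
qed

lemma Om_upper:
  assumes q: "q \<in> prob_simplex"
  shows "Om q \<noteq> \<infinity>"
proof -
  interpret P: prob_space "std_gauss :: (real^'d) measure" by (rule prob_gauss)
  define K where "K = (\<Sum>a\<in>UNIV. q $ a * (eps * (\<integral>z. z \<bullet> act a \<partial>std_gauss)))"
  have qn: "0 \<le> q $ a" for a using q by (simp add: prob_simplex_def)
  have qs: "(\<Sum>a\<in>UNIV. q $ a) = 1" using q by (simp add: prob_simplex_def)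
  have "q \<bullet> \<gamma> - F \<gamma> \<le> - K" for \<gamma>
  proof -
    have iv: "(\<integral>z. val \<gamma> z a \<partial>std_gauss) = \<gamma> $ a + eps * (\<integral>z. z \<bullet> act a \<partial>std_gauss)" for a
      unfolding val_def
      using P.prob_space by (subst Bochner_Integration.integral_add) (auto intro: integrable_inner)
    have "q \<bullet> \<gamma> + K = (\<integral>z. (\<Sum>a\<in>UNIV. q $ a * val \<gamma> z a) \<partial>std_gauss)"
      by (subst Bochner_Integration.integral_sum)
         (auto simp: integrable_val iv K_def inner_vec_sum algebra_simps sum.distrib)
    also have "\<dots> \<le> F \<gamma>"
      unfolding F_def
    proof (rule integral_mono)
      show "integrable std_gauss (\<lambda>z. \<Sum>a\<in>UNIV. q $ a * val \<gamma> z a)"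
        by (intro Bochner_Integration.integrable_sum integrable_mult_right integrable_val)
      show "integrable std_gauss (mx \<gamma>)" by (rule integrable_mx)
      fix z
      have "(\<Sum>a\<in>UNIV. q $ a * val \<gamma> z a) \<le> (\<Sum>a\<in>UNIV. q $ a * mx \<gamma> z)"
        by (intro sum_mono mult_left_mono val_le_mx qn)
      also have "\<dots> = mx \<gamma> z" by (simp add: sum_distrib_right[symmetric] qs)
      finally show "(\<Sum>a\<in>UNIV. q $ a * val \<gamma> z a) \<le> mx \<gamma> z" .
    qed
    finally show ?thesis by simp
  qed
  then have "Om q \<le> ereal (- K)"
    unfolding Om_eq by (intro SUP_least) simp
  then show ?thesis by auto
qed

end


declare transpose_matrix_vector[simp del]

context pert begin

abbreviation Am :: "real^'a^'d" where "Am \<equiv> act_matrix act"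

abbreviation OC :: "real^'d \<Rightarrow> ereal" where "OC \<equiv> Omega_pert_C eps act"

lemma Am_mult: "Am *v q = (\<Sum>a\<in>UNIV. q $ a *\<^sub>R act a)"
  by (simp add: vec_eq_iff matrix_vector_mult_def act_matrix_def mult.commute)

lemma AT_comp: "(transpose Am *v \<theta>) $ a = \<theta> \<bullet> act a"
  by (simp add: matrix_vector_mult_def act_matrix_def transpose_def inner_vec_def inner_real_def mult.commute)

lemma AT_inner: "(transpose Am *v \<theta>) \<bullet> q = \<theta> \<bullet> (Am *v q)"
  by (simp add: Am_mult inner_sum_right inner_vec_sum[of _ q] AT_comp mult.commute)

lemma OC_lower: "q \<in> prob_simplex \<Longrightarrow> Am *v q = \<mu> \<Longrightarrow> OC \<mu> \<le> Om q"
  unfolding Omega_pert_C_def by (rule Inf_lower) blast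

lemma OC_ge: "ereal (\<theta> \<bullet> \<mu> - F (transpose Am *v \<theta>)) \<le> OC \<mu>"
  unfolding Omega_pert_C_def
proof (rule Inf_greatest)
  fix x assume "x \<in> {Om q |q. q \<in> prob_simplex \<and> Am *v q = \<mu>}"
  then obtain q where x: "x = Om q" and q: "Am *v q = \<mu>" by blast
  have "ereal (q \<bullet> (transpose Am *v \<theta>) - F (transpose Am *v \<theta>)) \<le> Om q" by (rule Om_ge)
  then show "ereal (\<theta> \<bullet> \<mu> - F (transpose Am *v \<theta>)) \<le> x"
    using AT_inner[of \<theta> q] by (simp add: x q inner_commute)
qed

lemma conj_OC: "fconj OC \<theta> = ereal (F (transpose Am *v \<theta>))"
proof (rule antisym)
  show "fconj OC \<theta> \<le> ereal (F (transpose Am *v \<theta>))"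
    unfolding fconj_def
  proof (rule SUP_least)
    fix \<mu>
    have "ereal (\<theta> \<bullet> \<mu>) - OC \<mu> \<le> ereal (\<theta> \<bullet> \<mu>) - ereal (\<theta> \<bullet> \<mu> - F (transpose Am *v \<theta>))"
      by (rule ereal_minus_mono[OF order_refl OC_ge])
    then show "ereal (\<theta> \<bullet> \<mu>) - OC \<mu> \<le> ereal (F (transpose Am *v \<theta>))" by simp
  qed
  define \<gamma> where "\<gamma> = transpose Am *v \<theta>"
  have "OC (Am *v G \<gamma>) \<le> Om (G \<gamma>)"
    by (rule OC_lower) (auto simp: G_simplex)
  then have le: "OC (Am *v G \<gamma>) \<le> ereal (G \<gamma> \<bullet> \<gamma> - F \<gamma>)" by (simp add: Om_G)
  have "ereal (F \<gamma>) = ereal (\<theta> \<bullet> (Am *v G \<gamma>)) - ereal (G \<gamma> \<bullet> \<gamma> - F \<gamma>)"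
    using AT_inner[of \<theta> "G \<gamma>"] by (simp add: \<gamma>_def inner_commute)
  also have "\<dots> \<le> ereal (\<theta> \<bullet> (Am *v G \<gamma>)) - OC (Am *v G \<gamma>)"
    by (rule ereal_minus_mono) (auto intro: le)
  also have "\<dots> \<le> fconj OC \<theta>"
    unfolding fconj_def by (rule SUP_upper) simp
  finally show "ereal (F (transpose Am *v \<theta>)) \<le> fconj OC \<theta>" by (simp add: \<gamma>_def)
qed

lemma part3:
  assumes q0: "q0 \<in> prob_simplex" "Am *v q0 = \<mu>"
  shows "\<theta>' \<in> subgrad OC \<mu> \<longleftrightarrow> (\<forall>\<theta>''. fy_loss OC \<theta>' \<mu> \<le> fy_loss OC \<theta>'' \<mu>)"
proof -
  have up: "OC \<mu> \<noteq> \<infinity>"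
    using OC_lower[OF q0] Om_upper[OF q0(1)] by (metis ereal_infty_less_eq(1))
  have lo: "OC \<mu> \<noteq> -\<infinity>"
    using OC_ge[of 0 \<mu>] by auto
  obtain c where c: "OC \<mu> = ereal c" using up lo by (cases "OC \<mu>") auto
  define L where "L \<theta> = F (transpose Am *v \<theta>) + c - \<theta> \<bullet> \<mu>" for \<theta>
  have loss: "fy_loss OC \<theta> \<mu> = ereal (L \<theta>)" for \<theta>
    by (simp add: fy_loss_def conj_OC c L_def)
  have Lnn: "0 \<le> L \<theta>" for \<theta>
    using OC_ge[of \<theta> \<mu>] by (simp add: c L_def)
  have sub_iff: "\<theta>' \<in> subgrad OC \<mu> \<longleftrightarrow> L \<theta>' \<le> 0"
  proof
    assume "\<theta>' \<in> subgrad OC \<mu>"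
    then have sg: "OC y \<ge> ereal c + ereal (\<theta>' \<bullet> (y - \<mu>))" for y
      by (auto simp: subgrad_def c)
    define \<gamma> where "\<gamma> = transpose Am *v \<theta>'"
    have "OC (Am *v G \<gamma>) \<le> Om (G \<gamma>)"
      by (rule OC_lower) (auto simp: G_simplex)
    then have a1: "OC (Am *v G \<gamma>) \<le> ereal (G \<gamma> \<bullet> \<gamma> - F \<gamma>)" by (simp only: Om_G)
    have "ereal c + ereal (\<theta>' \<bullet> (Am *v G \<gamma> - \<mu>)) \<le> ereal (G \<gamma> \<bullet> \<gamma> - F \<gamma>)"
      using order_trans[OF sg[of "Am *v G \<gamma>"] a1] .
    then show "L \<theta>' \<le> 0"
      using AT_inner[of \<theta>' "G \<gamma>"] by (simp add: L_def \<gamma>_def inner_diff_right inner_commute)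
  next
    assume L0: "L \<theta>' \<le> 0"
    have "OC y \<ge> OC \<mu> + ereal (\<theta>' \<bullet> (y - \<mu>))" for y
    proof -
      have "OC \<mu> + ereal (\<theta>' \<bullet> (y - \<mu>)) \<le> ereal (\<theta>' \<bullet> y - F (transpose Am *v \<theta>'))"
        using L0 by (simp add: c L_def inner_diff_right)
      also have "\<dots> \<le> OC y" by (rule OC_ge)
      finally show ?thesis .
    qed
    then show "\<theta>' \<in> subgrad OC \<mu>"
      using up lo by (simp add: subgrad_def)
  qed
  have min_iff: "(\<forall>\<theta>''. L \<theta>' \<le> L \<theta>'') \<longleftrightarrow> L \<theta>' \<le> 0"
  proof
    assume L0: "L \<theta>' \<le> 0"
    show "\<forall>\<theta>''. L \<theta>' \<le> L \<theta>''" using L0 Lnn by (meson order_trans)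
  next
    assume mn: "\<forall>\<theta>''. L \<theta>' \<le> L \<theta>''"
    define \<gamma> where "\<gamma> = transpose Am *v \<theta>'"
    note \<gamma> = \<gamma>_def
    have d1: "((\<lambda>\<theta>. transpose Am *v \<theta>) has_derivative (\<lambda>h. transpose Am *v h)) (at \<theta>')"
      by (rule linear_imp_has_derivative) (rule matrix_vector_mul_linear)
    have d2: "((\<lambda>\<theta>. F (transpose Am *v \<theta>)) has_derivative (\<lambda>h. (transpose Am *v h) \<bullet> G \<gamma>)) (at \<theta>')"
      using has_derivative_compose[OF d1 F_deriv[of "transpose Am *v \<theta>'"]] by (simp add: \<gamma>_def)
    have dL: "(L has_derivative (\<lambda>h. (transpose Am *v h) \<bullet> G \<gamma> - h \<bullet> \<mu>)) (at \<theta>')"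
      unfolding L_def[abs_def]
      by (intro has_derivative_diff has_derivative_add_const d2 has_derivative_inner_left has_derivative_ident)
    have "(\<lambda>h. (transpose Am *v h) \<bullet> G \<gamma> - h \<bullet> \<mu>) = (\<lambda>h. 0)"
      by (rule has_derivative_local_min[OF dL]) (use mn in auto)
    then have z: "(transpose Am *v h) \<bullet> G \<gamma> - h \<bullet> \<mu> = 0" for h
      by (metis (no_types))
    define h where "h = Am *v G \<gamma> - \<mu>"
    have "h \<bullet> h = 0"
      using z[of h] AT_inner[of h "G \<gamma>"] by (simp add: h_def inner_diff_right inner_diff_left inner_commute)
    then have eq: "Am *v G \<gamma> = \<mu>" by (simp add: h_def)
    have "ereal c \<le> Om (G \<gamma>)"
      using OC_lower[OF G_simplex eq] by (simp add: c)
    then have "c \<le> G \<gamma> \<bullet> \<gamma> - F \<gamma>" by (simp add: Om_G)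
    then show "L \<theta>' \<le> 0"
      using AT_inner[of \<theta>' "G \<gamma>"] eq by (simp add: L_def \<gamma>[symmetric] inner_commute)
  qed
  show ?thesis
    unfolding sub_iff loss ereal_less_eq(3) min_iff ..
qed

end


lemma xlogx_deriv:
  assumes x: "x > 0"
  shows "(xlogx has_real_derivative (ln x + 1)) (at x)"
proof -
  have d: "((\<lambda>y. y * ln y) has_real_derivative (ln x + 1)) (at x)"
    using x by (auto intro!: derivative_eq_intros simp: field_simps)
  have ev: "eventually (\<lambda>y. y * ln y = xlogx y) (nhds x)"
  proof -
    have "eventually (\<lambda>y. y \<in> {0<..}) (nhds x)"
      using x by (intro eventually_nhds_in_open) auto
    then show ?thesis by (rule eventually_mono) (simp add: xlogx_def)
  qed
  show ?thesis using d by (subst (asm) DERIV_cong_ev[OF refl ev refl])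
qed


lemma negent_grad:
  fixes T :: "'a set" and q g :: "'a \<Rightarrow> real"
  assumes fin: "finite T" and pos: "\<forall>c\<in>T. q c > 0" and sum1: "(\<Sum>c\<in>T. q c) = 1"
    and g: "g \<in> negent_subgrad_on T q" and a: "a \<in> T" and b: "b \<in> T"
  shows "g a - ln (q a) = g b - ln (q b)"
proof (cases "a = b")
  case True then show ?thesis by simp
next
  case ab: False
  define \<psi> where "\<psi> t = xlogx (q a + t) + xlogx (q b - t) - t * (g a - g b)" for t
  define d where "d = min (q a) (q b)"
  have qa: "q a > 0" and qb: "q b > 0" using pos a b by auto
  have d: "d > 0" using qa qb by (simp add: d_def)
  have mn: "\<psi> 0 \<le> \<psi> t" if t: "\<bar>0 - t\<bar> < d" for t
  proof -
    define p where "p c = q c + (if c = a then t else 0) - (if c = b then t else 0)" for c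
    have pa: "p a = q a + t" and pb: "p b = q b - t" using ab by (auto simp: p_def)
    have pnn: "\<forall>c\<in>T. 0 \<le> p c"
    proof
      fix c assume c: "c \<in> T"
      show "0 \<le> p c"
      proof (cases "c = a \<or> c = b")
        case True then show ?thesis using t ab pa pb by (auto simp: d_def)
      next
        case False then show ?thesis using pos c by (auto simp: p_def intro: less_imp_le)
      qed
    qed
    have psum: "(\<Sum>c\<in>T. p c) = 1"
      unfolding p_def using fin a b sum1
      by (simp add: sum.distrib sum_subtractf)
    from g have ineq: "(\<Sum>c\<in>T. xlogx (p c)) \<ge> (\<Sum>c\<in>T. xlogx (q c)) + (\<Sum>c\<in>T. g c * (p c - q c))"
      using pnn psum unfolding negent_subgrad_on_def by blast
    have s1: "(\<Sum>c\<in>T. g c * (p c - q c)) = t * (g a - g b)"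
    proof -
      have "(\<Sum>c\<in>T. g c * (p c - q c)) = (\<Sum>c\<in>T. (if c = a then g c * t else 0) - (if c = b then g c * t else 0))"
        by (rule sum.cong) (auto simp: p_def algebra_simps)
      also have "\<dots> = t * (g a - g b)"
        using fin a b by (simp add: sum_subtractf algebra_simps)
      finally show ?thesis .
    qed
    have s2: "(\<Sum>c\<in>T. xlogx (p c)) - (\<Sum>c\<in>T. xlogx (q c)) =
        (xlogx (q a + t) - xlogx (q a)) + (xlogx (q b - t) - xlogx (q b))"
    proof -
      have "(\<Sum>c\<in>T. xlogx (p c)) - (\<Sum>c\<in>T. xlogx (q c)) = (\<Sum>c\<in>T. xlogx (p c) - xlogx (q c))"
        by (simp add: sum_subtractf)
      also have "\<dots> = (\<Sum>c\<in>T. (if c = a then xlogx (q a + t) - xlogx (q a) else 0) + (if c = b then xlogx (q b - t) - xlogx (q b) else 0))"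
        by (rule sum.cong) (auto simp: p_def ab)
      also have "\<dots> = (xlogx (q a + t) - xlogx (q a)) + (xlogx (q b - t) - xlogx (q b))"
        using fin a b by (simp add: sum.distrib)
      finally show ?thesis .
    qed
    show ?thesis using ineq s1 s2 by (simp add: \<psi>_def)
  qed
  have d1: "((\<lambda>t. xlogx (q a + t)) has_real_derivative (ln (q a) + 1) * 1) (at 0)"
    by (rule DERIV_chain2[where f=xlogx]) (auto intro!: derivative_eq_intros xlogx_deriv qa)
  have d2: "((\<lambda>t. xlogx (q b - t)) has_real_derivative (ln (q b) + 1) * (-1)) (at 0)"
    by (rule DERIV_chain2[where f=xlogx]) (auto intro!: derivative_eq_intros xlogx_deriv qb)
  have d3: "((\<lambda>t. t * (g a - g b)) has_real_derivative 1 * (g a - g b)) (at 0)"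
    by (auto intro!: derivative_eq_intros)
  have "(\<psi> has_real_derivative ((ln (q a) + 1) * 1 + (ln (q b) + 1) * (-1) - 1 * (g a - g b))) (at 0)"
    unfolding \<psi>_def[abs_def]
    by (intro DERIV_diff DERIV_add d1 d2 d3)
  then have "(ln (q a) + 1) * 1 + (ln (q b) + 1) * (-1) - 1 * (g a - g b) = 0"
    by (rule DERIV_local_min[OF _ d]) (use mn in blast)
  then show ?thesis by simp
qed


lemma softmax_negent:
  fixes q :: "real^'a::finite" and w :: "'a \<Rightarrow> real"
  assumes q: "q \<in> prob_simplex" and \<gamma>: "\<gamma> \<in> negent_subdiff q"
  shows "softmax_ext (\<lambda>a. \<gamma> a + ereal (w a)) = (\<chi> a. q $ a * exp (w a) / (\<Sum>b\<in>UNIV. q $ b * exp (w b)))"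
proof -
  define T where "T = {a. q $ a > 0}"
  define g where "g a = real_of_ereal (\<gamma> a)" for a
  have qnn: "0 \<le> q $ a" for a using q by (simp add: prob_simplex_def)
  have notT: "a \<notin> T \<longleftrightarrow> q $ a = 0" for a using qnn[of a] by (auto simp: T_def)
  have gmin: "a \<notin> T \<Longrightarrow> \<gamma> a = -\<infinity>" for a using \<gamma> notT by (auto simp: negent_subdiff_def)
  have gfin: "a \<in> T \<Longrightarrow> \<gamma> a = ereal (g a)" for a
  proof -
    assume "a \<in> T"
    then have "\<gamma> a \<noteq> \<infinity>" "\<gamma> a \<noteq> -\<infinity>" using \<gamma> by (auto simp: negent_subdiff_def T_def)
    then show ?thesis unfolding g_def by (cases "\<gamma> a") simp_all
  qed
  have gsub: "g \<in> negent_subgrad_on T (\<lambda>a. q $ a)"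
    using \<gamma> unfolding negent_subdiff_def T_def g_def[abs_def] by simp
  have sumT: "(\<Sum>c\<in>T. q $ c) = (\<Sum>c\<in>UNIV. q $ c)"
    by (rule sum.mono_neutral_left) (auto simp: notT)
  then have sum1: "(\<Sum>c\<in>T. q $ c) = 1" using q by (simp add: prob_simplex_def)
  then have "T \<noteq> {}" by auto
  then obtain a0 where a0: "a0 \<in> T" by blast
  define C where "C = g a0 - ln (q $ a0)"
  have gC: "a \<in> T \<Longrightarrow> g a = ln (q $ a) + C" for a
  proof -
    assume a: "a \<in> T"
    have "g a - ln (q $ a) = g a0 - ln (q $ a0)"
      by (rule negent_grad[OF _ _ sum1 gsub a a0]) (simp_all add: T_def)
    then show ?thesis by (simp add: C_def)
  qed
  have ex: "a \<in> T \<Longrightarrow> exp (real_of_ereal (\<gamma> a + ereal (w a))) = exp C * (q $ a * exp (w a))" for a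
    by (simp add: gfin gC exp_add T_def)
  have supp: "{b. \<gamma> b + ereal (w b) \<noteq> -\<infinity>} = T"
  proof (intro set_eqI iffI)
    fix b assume "b \<in> {b. \<gamma> b + ereal (w b) \<noteq> -\<infinity>}"
    then show "b \<in> T" using gmin[of b] by (cases "b \<in> T") simp_all
  next
    fix b assume "b \<in> T"
    then show "b \<in> {b. \<gamma> b + ereal (w b) \<noteq> -\<infinity>}" using gfin[of b] by simp
  qed
  define Z where "Z = (\<Sum>b\<in>UNIV. q $ b * exp (w b))"
  have ZT: "(\<Sum>b\<in>T. q $ b * exp (w b)) = Z"
    unfolding Z_def by (rule sum.mono_neutral_left) (auto simp: notT)
  have den: "(\<Sum>b\<in>T. exp (real_of_ereal (\<gamma> b + ereal (w b)))) = exp C * Z"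
    by (simp add: ex sum_distrib_left[symmetric] ZT)
  show ?thesis
    unfolding Z_def[symmetric]
  proof (subst vec_eq_iff, intro allI)
    fix a
    show "softmax_ext (\<lambda>a. \<gamma> a + ereal (w a)) $ a = (\<chi> a. q $ a * exp (w a) / Z) $ a"
    proof (cases "a \<in> T")
      case True
      have e: "exp (g a + w a) = exp C * (q $ a * exp (w a))"
        using ex[OF True] gfin[OF True] by simp
      show ?thesis
        unfolding softmax_ext_def supp using gfin[OF True]
        by (simp add: den e)
    next
      case False
      then show ?thesis
        unfolding softmax_ext_def using gmin[OF False] notT[of a] by simp
    qed
  qed
qed


declare transpose_matrix_vector[simp del]

context pert begin

lemma val_theta: "val (transpose Am *v \<theta>) z a = (\<theta> + eps *\<^sub>R z) \<bullet> act a"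
  by (simp add: val_def AT_comp inner_add_left)

lemma part1:
  assumes M: "prob_space M"
    and indep: "prob_space.indep_vars M (\<lambda>_. borel) Z {1..m}"
    and gauss: "\<forall>i\<in>{1..m}. distr M borel (Z i) = std_gauss"
    and m: "m \<ge> 1"
  shows "\<exists>g :: real^'a.
        (\<forall>\<gamma>. fconj Om \<gamma> \<noteq> \<infinity> \<and> fconj Om \<gamma> \<noteq> -\<infinity>) \<and>
        ((\<lambda>\<gamma>. real_of_ereal (fconj Om \<gamma>)) has_derivative (\<lambda>h. h \<bullet> g)) (at (transpose Am *v \<theta>)) \<and>
        (AE \<omega> in M. \<forall>i\<in>{1..m}. \<exists>!a. \<forall>b. (\<theta> + eps *\<^sub>R Z i \<omega>) \<bullet> act b \<le> (\<theta> + eps *\<^sub>R Z i \<omega>) \<bullet> act a) \<and>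
        (\<forall>s :: nat \<Rightarrow> 'a.
           measure M {\<omega>\<in>space M. \<forall>i\<in>{1..m}. \<forall>b. b \<noteq> s i \<longrightarrow>
               (\<theta> + eps *\<^sub>R Z i \<omega>) \<bullet> act b < (\<theta> + eps *\<^sub>R Z i \<omega>) \<bullet> act (s i)}
           = (\<Prod>i\<in>{1..m}. g $ s i))"
proof -
  interpret MP: prob_space M by (rule M)
  define \<gamma>\<theta> where "\<gamma>\<theta> = transpose Am *v \<theta>"
  have rv: "Z i \<in> measurable M borel" if "i \<in> {1..m}" for i
    using indep that by (auto simp: MP.indep_vars_def)
  have fin: "\<forall>\<gamma>. fconj Om \<gamma> \<noteq> \<infinity> \<and> fconj Om \<gamma> \<noteq> -\<infinity>"
    by (simp add: biconj)
  have eqF: "(\<lambda>\<gamma>. real_of_ereal (fconj Om \<gamma>)) = F"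
    by (simp add: biconj fun_eq_iff)
  have der: "((\<lambda>\<gamma>. real_of_ereal (fconj Om \<gamma>)) has_derivative (\<lambda>h. h \<bullet> G \<gamma>\<theta>)) (at (transpose Am *v \<theta>))"
    unfolding eqF \<gamma>\<theta>_def by (rule F_deriv)
  have AEi: "AE \<omega> in M. nt \<gamma>\<theta> (Z i \<omega>)" if i: "i \<in> {1..m}" for i
  proof -
    have "AE z in distr M borel (Z i). nt \<gamma>\<theta> z"
      unfolding gauss[rule_format, OF i] by (rule AE_nt)
    then show ?thesis
      by (subst (asm) AE_distr_iff) (auto intro: rv[OF i])
  qed
  have vt: "val \<gamma>\<theta> z a = (\<theta> + eps *\<^sub>R z) \<bullet> act a" for z a
    unfolding \<gamma>\<theta>_def by (rule val_theta)
  have uniq: "\<exists>!a. \<forall>b. (\<theta> + eps *\<^sub>R z) \<bullet> act b \<le> (\<theta> + eps *\<^sub>R z) \<bullet> act a" if nt: "nt \<gamma>\<theta> z" for z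
  proof -
    obtain a where a: "z \<in> S \<gamma>\<theta> a" using winner[OF nt] by blast
    have am: "\<forall>b. val \<gamma>\<theta> z b \<le> val \<gamma>\<theta> z a"
    proof
      fix b show "val \<gamma>\<theta> z b \<le> val \<gamma>\<theta> z a"
        using a unfolding S_def by (cases "b = a") (auto intro: less_imp_le)
    qed
    show ?thesis
    proof (rule ex1I[of _ a])
      show "\<forall>b. (\<theta> + eps *\<^sub>R z) \<bullet> act b \<le> (\<theta> + eps *\<^sub>R z) \<bullet> act a"
        using am by (simp add: vt)
    next
      fix a' assume a': "\<forall>b. (\<theta> + eps *\<^sub>R z) \<bullet> act b \<le> (\<theta> + eps *\<^sub>R z) \<bullet> act a'"
      then have "val \<gamma>\<theta> z a \<le> val \<gamma>\<theta> z a'" "val \<gamma>\<theta> z a' \<le> val \<gamma>\<theta> z a"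
        using am by (simp_all add: vt)
      then have "val \<gamma>\<theta> z a' = val \<gamma>\<theta> z a" by simp
      then show "a' = a" using nt unfolding nt_def by blast
    qed
  qed
  have AE: "AE \<omega> in M. \<forall>i\<in>{1..m}. \<exists>!a. \<forall>b. (\<theta> + eps *\<^sub>R Z i \<omega>) \<bullet> act b \<le> (\<theta> + eps *\<^sub>R Z i \<omega>) \<bullet> act a"
  proof (rule AE_finite_allI)
    fix i assume i: "i \<in> {1..m}"
    show "AE \<omega> in M. \<exists>!a. \<forall>b. (\<theta> + eps *\<^sub>R Z i \<omega>) \<bullet> act b \<le> (\<theta> + eps *\<^sub>R Z i \<omega>) \<bullet> act a"
      using AEi[OF i] by (rule eventually_mono) (rule uniq)
  qed simp
  have prod: "measure M {\<omega>\<in>space M. \<forall>i\<in>{1..m}. \<forall>b. b \<noteq> s i \<longrightarrow>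
               (\<theta> + eps *\<^sub>R Z i \<omega>) \<bullet> act b < (\<theta> + eps *\<^sub>R Z i \<omega>) \<bullet> act (s i)}
           = (\<Prod>i\<in>{1..m}. G \<gamma>\<theta> $ s i)" for s :: "nat \<Rightarrow> 'a"
  proof -
    have ne: "{1..m} \<noteq> {}" using m by simp
    have "{\<omega>\<in>space M. \<forall>i\<in>{1..m}. \<forall>b. b \<noteq> s i \<longrightarrow>
               (\<theta> + eps *\<^sub>R Z i \<omega>) \<bullet> act b < (\<theta> + eps *\<^sub>R Z i \<omega>) \<bullet> act (s i)}
        = (\<Inter>i\<in>{1..m}. Z i -` S \<gamma>\<theta> (s i) \<inter> space M)"
      using ne unfolding S_def vt by blast
    then have "measure M {\<omega>\<in>space M. \<forall>i\<in>{1..m}. \<forall>b. b \<noteq> s i \<longrightarrow>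
               (\<theta> + eps *\<^sub>R Z i \<omega>) \<bullet> act b < (\<theta> + eps *\<^sub>R Z i \<omega>) \<bullet> act (s i)}
        = MP.prob (\<Inter>i\<in>{1..m}. Z i -` S \<gamma>\<theta> (s i) \<inter> space M)" by simp
    also have "\<dots> = (\<Prod>i\<in>{1..m}. MP.prob (Z i -` S \<gamma>\<theta> (s i) \<inter> space M))"
      by (rule MP.indep_varsD[OF indep ne]) auto
    also have "\<dots> = (\<Prod>i\<in>{1..m}. G \<gamma>\<theta> $ s i)"
    proof (rule prod.cong[OF refl])
      fix i assume i: "i \<in> {1..m}"
      have "MP.prob (Z i -` S \<gamma>\<theta> (s i) \<inter> space M) = measure (distr M borel (Z i)) (S \<gamma>\<theta> (s i))"
        by (rule measure_distr[symmetric]) (auto intro: rv[OF i])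
      also have "\<dots> = G \<gamma>\<theta> $ s i" using gauss i by (simp add: G_comp)
      finally show "MP.prob (Z i -` S \<gamma>\<theta> (s i) \<inter> space M) = G \<gamma>\<theta> $ s i" .
    qed
    finally show ?thesis .
  qed
  show ?thesis
    by (rule exI[of _ "G \<gamma>\<theta>"]) (intro conjI fin der AE allI prod)
qed

end


declare transpose_matrix_vector[simp del]

lemma count_sum:
  fixes v :: "'a::finite \<Rightarrow> 'b::real_vector"
  shows "(\<Sum>a\<in>UNIV. (\<Sum>i=1..m. if s i = a then 1 else 0::real) *\<^sub>R v a) = (\<Sum>i=1..m. v (s i))"
proof -
  have "(\<Sum>a\<in>UNIV. (\<Sum>i=1..m. if s i = a then 1 else 0::real) *\<^sub>R v a)
      = (\<Sum>a\<in>UNIV. \<Sum>i=1..m. (if s i = a then v a else 0))"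
    by (simp add: scaleR_sum_left if_distrib[of "\<lambda>c. c *\<^sub>R _"] cong: if_cong)
  also have "\<dots> = (\<Sum>i=1..m. \<Sum>a\<in>UNIV. (if s i = a then v a else 0))"
    by (rule sum.swap)
  also have "\<dots> = (\<Sum>i=1..m. v (s i))"
    by (simp add: if_distrib cong: if_cong)
  finally show ?thesis .
qed

lemma act_matrix_mult: "act_matrix act *v q = (\<Sum>a\<in>UNIV. q $ a *\<^sub>R act a)"
  by (simp add: vec_eq_iff matrix_vector_mult_def act_matrix_def mult.commute)

lemma weights:
  fixes act :: "'a::finite \<Rightarrow> real^'d::finite" and e :: "'a \<Rightarrow> real" and s :: "nat \<Rightarrow> 'a"
  assumes m: "m \<ge> 1" and e: "\<And>a. e a > 0"
  defines "qhat \<equiv> (\<chi> a. (1 / real m) * (\<Sum>i=1..m. if s i = a then 1 else 0)) :: real^'a"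
  defines "W \<equiv> (\<chi> a. qhat $ a * e a / (\<Sum>b\<in>UNIV. qhat $ b * e b)) :: real^'a"
  shows "qhat \<in> prob_simplex" "W \<in> prob_simplex"
    "act_matrix act *v W = (\<Sum>i=1..m. (e (s i) / (\<Sum>j=1..m. e (s j))) *\<^sub>R act (s i))"
proof -
  define cnt where "cnt a = (\<Sum>i=1..m. if s i = a then 1 else 0::real)" for a
  define Zs where "Zs = (\<Sum>j=1..m. e (s j))"
  have mpos: "real m > 0" using m by simp
  have Zs: "Zs > 0" unfolding Zs_def using m e by (intro sum_pos) auto
  have qh: "qhat $ a = cnt a / real m" for a by (simp add: qhat_def cnt_def)
  have cnt_nn: "0 \<le> cnt a" for a unfolding cnt_def by (rule sum_nonneg) simp
  have sumcnt: "(\<Sum>a\<in>UNIV. cnt a * f a) = (\<Sum>i=1..m. f (s i))" for f :: "'a \<Rightarrow> real"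
    using count_sum[of s m f] by (simp add: cnt_def)
  have den: "(\<Sum>b\<in>UNIV. qhat $ b * e b) = Zs / real m"
    using sumcnt[of e] by (simp add: qh Zs_def sum_divide_distrib[symmetric])
  show "qhat \<in> prob_simplex"
    using sumcnt[of "\<lambda>_. 1"] mpos
    by (simp add: prob_simplex_def qh cnt_nn sum_divide_distrib[symmetric])
  have Wc: "W $ a = cnt a * e a / Zs" for a
  proof -
    have "W $ a = (cnt a / real m) * e a / (Zs / real m)" unfolding W_def vec_lambda_beta den by (simp add: qh)
    also have "\<dots> = cnt a * e a / Zs" using mpos by (simp add: field_simps)
    finally show ?thesis .
  qed
  show "W \<in> prob_simplex"
    using sumcnt[of e] Zs e
    by (simp add: prob_simplex_def Wc cnt_nn less_imp_le sum_divide_distrib[symmetric] Zs_def)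
  have "act_matrix act *v W = (\<Sum>a\<in>UNIV. cnt a *\<^sub>R ((e a / Zs) *\<^sub>R act a))"
    by (simp add: act_matrix_mult Wc)
  also have "\<dots> = (\<Sum>i=1..m. (e (s i) / Zs) *\<^sub>R act (s i))"
    using count_sum[of s m "\<lambda>a. (e a / Zs) *\<^sub>R act a"] by (simp add: cnt_def)
  finally show "act_matrix act *v W = (\<Sum>i=1..m. (e (s i) / (\<Sum>j=1..m. e (s j))) *\<^sub>R act (s i))"
    by (simp add: Zs_def)
qed

theorem proposition1:
  fixes act :: "'a::finite \<Rightarrow> real^'d::finite"
    and Q :: "'a \<Rightarrow> real" and \<tau> \<epsilon> :: real and m :: nat
    and \<theta> :: "real^'d"
    and M :: "'w measure" and Z :: "nat \<Rightarrow> 'w \<Rightarrow> real^'d"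
  assumes inj: "inj act"
    and tau: "\<tau> > 0" and eps: "\<epsilon> > 0" and m: "m \<ge> 1"
    and M: "prob_space M"
    and Z_indep: "prob_space.indep_vars M (\<lambda>_. borel) Z {1..m}"
    and Z_gauss: "\<forall>i\<in>{1..m}. distr M borel (Z i) = std_gauss"
  shows
    \<comment> \<open>(i) sampling i.i.d. from grad Omega*_{eps,Delta}(A^T theta) is step (i)\<close>
    "(\<exists>g :: real^'a.
        (\<forall>\<gamma>. fconj (Omega_pert_simplex \<epsilon> act) \<gamma> \<noteq> \<infinity> \<and>
              fconj (Omega_pert_simplex \<epsilon> act) \<gamma> \<noteq> -\<infinity>) \<and>
        ((\<lambda>\<gamma>. real_of_ereal (fconj (Omega_pert_simplex \<epsilon> act) \<gamma>)) has_derivative (\<lambda>h. h \<bullet> g))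
           (at (transpose (act_matrix act) *v \<theta>)) \<and>
        (AE \<omega> in M. \<forall>i\<in>{1..m}. \<exists>!a. \<forall>b. (\<theta> + \<epsilon> *\<^sub>R Z i \<omega>) \<bullet> act b \<le> (\<theta> + \<epsilon> *\<^sub>R Z i \<omega>) \<bullet> act a) \<and>
        (\<forall>s :: nat \<Rightarrow> 'a.
           measure M {\<omega>\<in>space M. \<forall>i\<in>{1..m}. \<forall>b. b \<noteq> s i \<longrightarrow>
               (\<theta> + \<epsilon> *\<^sub>R Z i \<omega>) \<bullet> act b < (\<theta> + \<epsilon> *\<^sub>R Z i \<omega>) \<bullet> act (s i)}
           = (\<Prod>i\<in>{1..m}. g $ s i)))
     \<and>
    \<comment> \<open>(ii) for any samples and any subgradient, mu^{(t+1)} is the target action\<close>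
     (\<forall>s :: nat \<Rightarrow> 'a.
        let qhat = (\<chi> a. (1 / real m) * (\<Sum>i=1..m. if s i = a then 1 else 0));
            ahat = (\<Sum>i=1..m. (exp (Q (s i) / \<tau>) / (\<Sum>j=1..m. exp (Q (s j) / \<tau>))) *\<^sub>R act (s i))
        in \<forall>\<gamma>\<in>negent_subdiff qhat.
             act_matrix act *v softmax_ext (\<lambda>a. \<gamma> a + ereal (Q a / \<tau>)) = ahat)
     \<and>
    \<comment> \<open>(iii) subgradient condition iff Fenchel-Young loss minimization\<close>
     (\<forall>s :: nat \<Rightarrow> 'a.
        let ahat = (\<Sum>i=1..m. (exp (Q (s i) / \<tau>) / (\<Sum>j=1..m. exp (Q (s j) / \<tau>))) *\<^sub>R act (s i))
        in \<forall>\<theta>'. \<theta>' \<in> subgrad (Omega_pert_C \<epsilon> act) ahat \<longleftrightarrow>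
              (\<forall>\<theta>''. fy_loss (Omega_pert_C \<epsilon> act) \<theta>' ahat \<le> fy_loss (Omega_pert_C \<epsilon> act) \<theta>'' ahat))"
proof -
  interpret pert \<epsilon> act using eps inj by unfold_locales
  have P1: "\<exists>g :: real^'a.
        (\<forall>\<gamma>. fconj (Omega_pert_simplex \<epsilon> act) \<gamma> \<noteq> \<infinity> \<and>
              fconj (Omega_pert_simplex \<epsilon> act) \<gamma> \<noteq> -\<infinity>) \<and>
        ((\<lambda>\<gamma>. real_of_ereal (fconj (Omega_pert_simplex \<epsilon> act) \<gamma>)) has_derivative (\<lambda>h. h \<bullet> g))
           (at (transpose (act_matrix act) *v \<theta>)) \<and>
        (AE \<omega> in M. \<forall>i\<in>{1..m}. \<exists>!a. \<forall>b. (\<theta> + \<epsilon> *\<^sub>R Z i \<omega>) \<bullet> act b \<le> (\<theta> + \<epsilon> *\<^sub>R Z i \<omega>) \<bullet> act a) \<and>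
        (\<forall>s :: nat \<Rightarrow> 'a.
           measure M {\<omega>\<in>space M. \<forall>i\<in>{1..m}. \<forall>b. b \<noteq> s i \<longrightarrow>
               (\<theta> + \<epsilon> *\<^sub>R Z i \<omega>) \<bullet> act b < (\<theta> + \<epsilon> *\<^sub>R Z i \<omega>) \<bullet> act (s i)}
           = (\<Prod>i\<in>{1..m}. g $ s i))"
    by (rule part1[OF M Z_indep Z_gauss m])
  have P23: "(let qhat = (\<chi> a. (1 / real m) * (\<Sum>i=1..m. if s i = a then 1 else 0));
            ahat = (\<Sum>i=1..m. (exp (Q (s i) / \<tau>) / (\<Sum>j=1..m. exp (Q (s j) / \<tau>))) *\<^sub>R act (s i))
        in \<forall>\<gamma>\<in>negent_subdiff qhat.
             act_matrix act *v softmax_ext (\<lambda>a. \<gamma> a + ereal (Q a / \<tau>)) = ahat)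
     \<and> (let ahat = (\<Sum>i=1..m. (exp (Q (s i) / \<tau>) / (\<Sum>j=1..m. exp (Q (s j) / \<tau>))) *\<^sub>R act (s i))
        in \<forall>\<theta>'. \<theta>' \<in> subgrad (Omega_pert_C \<epsilon> act) ahat \<longleftrightarrow>
              (\<forall>\<theta>''. fy_loss (Omega_pert_C \<epsilon> act) \<theta>' ahat \<le> fy_loss (Omega_pert_C \<epsilon> act) \<theta>'' ahat))"
    for s :: "nat \<Rightarrow> 'a"
  proof -
    define e where "e a = exp (Q a / \<tau>)" for a
    define qhat where "qhat = ((\<chi> a. (1 / real m) * (\<Sum>i=1..m. if s i = a then 1 else 0)) :: real^'a)"
    define W where "W = ((\<chi> a. qhat $ a * e a / (\<Sum>b\<in>UNIV. qhat $ b * e b)) :: real^'a)"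
    define ahat where "ahat = (\<Sum>i=1..m. (e (s i) / (\<Sum>j=1..m. e (s j))) *\<^sub>R act (s i))"
    have epos: "\<And>a. e a > 0" by (simp add: e_def)
    note w1 = weights(1)[where e=e and s=s and m=m, OF m epos, folded qhat_def]
    note w2 = weights(2)[where e=e and s=s and m=m, OF m epos, folded qhat_def, folded W_def]
    note w3 = weights(3)[where e=e and s=s and m=m and act=act, OF m epos, folded qhat_def, folded W_def, folded ahat_def]
    have ii: "\<forall>\<gamma>\<in>negent_subdiff qhat. act_matrix act *v softmax_ext (\<lambda>a. \<gamma> a + ereal (Q a / \<tau>)) = ahat"
    proof
      fix \<gamma> assume \<gamma>: "\<gamma> \<in> negent_subdiff qhat"
      have "softmax_ext (\<lambda>a. \<gamma> a + ereal (Q a / \<tau>)) = W"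
        using softmax_negent[OF w1 \<gamma>, of "\<lambda>a. Q a / \<tau>"] by (simp add: W_def e_def)
      then show "act_matrix act *v softmax_ext (\<lambda>a. \<gamma> a + ereal (Q a / \<tau>)) = ahat"
        using w3 by simp
    qed
    have iii: "\<forall>\<theta>'. \<theta>' \<in> subgrad (Omega_pert_C \<epsilon> act) ahat \<longleftrightarrow>
              (\<forall>\<theta>''. fy_loss (Omega_pert_C \<epsilon> act) \<theta>' ahat \<le> fy_loss (Omega_pert_C \<epsilon> act) \<theta>'' ahat)"
      using part3[OF w2 w3] by blast
    show ?thesis
      using ii iii by (simp add: Let_def qhat_def ahat_def e_def)
  qed
  show ?thesis
    using P1 P23 by (simp add: Let_def)
qed


end
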